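(* Let $\mathbf x,\mathbf y$ be two different instances. If $P(\mathbf y\in I(\mathbf x))<1$, then $P(I(\mathbf x)\cap I(\mathbf y)=\emptyset)=1$, meaning: for every instance $\mathbf w$, $P(\mathbf w\in I(\mathbf x)\cap I(\mathbf y))=0$. Moreover, $$P(\mathbf y\in I(\mathbf x))=1\iff P(I(\mathbf x)=I(\mathbf y))=1,$$ where $P(I(\mathbf x)=I(\mathbf y))=1$ means: for every instance $\mathbf w$, $P(\mathbf w\in I(\mathbf x))=1$ if and only if $P(\mathbf w\in I(\mathbf y))=1$.
   Context: Setting: $n$ instances with covariates in $\mathbb R^d$ form the dataset $\mathcal D=\mathcal D_n$; a forest of $K$ axis-aligned causal trees is built on $\mathcal D$, the trees being independent given $\mathcal D$. $L_k(\mathbf u)$ is the leaf of tree $k$ containing $\mathbf u$ (each point lies in exactly one leaf of each tree). For instances $\mathbf u,\mathbf v$, $P(\mathbf u\in L(\mathbf v))$ denotes $P(\mathbf u\in L_k(\mathbf v)\mid\mathcal D)$ (same for all $k$), the events $\{\mathbf u\in L_k(\mathbf v)\}$, $k=1,\dots,K$, are independent given $\mathcal D$, and $\lim_{n\to\infty}P(\mathbf u\in L(\mathbf v))$ is assumed to exist for all pairs. LILI with $K$ trees: $\mathbf u\in I(\mathbf v,\Theta_K)$ iff the number of $k\le K$ with $\mathbf u\in L_k(\mathbf v)$ exceeds $K-\sqrt K$. All probabilities of events involving $I(\cdot)$ are conditional on $\mathcal D$ and defined as $\lim_{K\to\infty}\lim_{n\to\infty}$ of the corresponding probabilities with $I(\cdot,\Theta_K)$,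 e.g. $P(\mathbf u\in I(\mathbf v)):=\lim_{K}\lim_{n}P(\mathbf u\in I(\mathbf v,\Theta_K)\mid\mathcal D_n)$ and $P(\mathbf w\in I(\mathbf x)\cap I(\mathbf y)):=\lim_K\lim_nP(\mathbf w\in I(\mathbf x,\Theta_K)\cap I(\mathbf y,\Theta_K)\mid\mathcal D_n)$. *)

theory Defs
  imports "HOL-Probability.Probability"
begin

text \<open>For each dataset size n, Omega n is the probability space of the
tree randomness given the dataset D_n (so all probabilities are conditional on D_n).
L n k om v is the leaf of tree k (of the forest built on D_n, outcome om) containing v.\<close>

text \<open>The LILI event  u in I(v, Theta_K): more than K - sqrt K of the first K trees
put u into the leaf of v.\<close>
definition lili_event ::
  "'o measure \<Rightarrow> (nat \<Rightarrow> 'o \<Rightarrow> 'a \<Rightarrow> 'a set) \<Rightarrow> nat \<Rightarrow> 'a \<Rightarrow> 'a \<Rightarrow> 'o set" where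
  "lili_event M Lf K u v =
     {om \<in> space M. real (card {k \<in> {..<K}. u \<in> Lf k om v}) > real K - sqrt (real K)}"

definition prob_I ::
  "(nat \<Rightarrow> 'o measure) \<Rightarrow> (nat \<Rightarrow> nat \<Rightarrow> 'o \<Rightarrow> 'a \<Rightarrow> 'a set) \<Rightarrow> 'a \<Rightarrow> 'a \<Rightarrow> real" where
  "prob_I Om L u v =
     lim (\<lambda>K. lim (\<lambda>n. measure (Om n) (lili_event (Om n) (L n) K u v)))"

text \<open>P(w in I(x) \<inter> I(y)) = c, as the iterated limit lim_K lim_n; since the inner limit
need not exist a priori, we require that both lim_K limsup_n and lim_K liminf_n equal c
(this coincides with lim_K lim_n = c whenever the inner limits exist).\<close>
definition prob_I_inter_is ::
  "(nat \<Rightarrow> 'o measure) \<Rightarrow> (nat \<Rightarrow> nat \<Rightarrow> 'o \<Rightarrow> 'a \<Rightarrow> 'a set) \<Rightarrow> 'a \<Rightarrow> 'a \<Rightarrow> 'a \<Rightarrow> real \<Rightarrow> bool" where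
  "prob_I_inter_is Om L w x y c \<longleftrightarrow>
     ((\<lambda>K. limsup (\<lambda>n. ereal (measure (Om n)
          (lili_event (Om n) (L n) K w x \<inter> lili_event (Om n) (L n) K w y)))) \<longlonglongrightarrow> ereal c) \<and>
     ((\<lambda>K. liminf (\<lambda>n. ereal (measure (Om n)
          (lili_event (Om n) (L n) K w x \<inter> lili_event (Om n) (L n) K w y)))) \<longlonglongrightarrow> ereal c)"

end

theory Submission
  imports Defs "HOL-Real_Asymp.Real_Asymp"
begin


lemma (in prob_space) count_prob:
  fixes A :: "nat \<Rightarrow> 'a set"
  assumes ev: "\<And>k. A k \<in> events" and ind: "indep_events A UNIV" and pr: "\<And>k. prob (A k) = q"
  shows "prob {\<omega>\<in>space M. P (card {k\<in>{..<K}. \<omega> \<in> A k})} =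
         (\<Sum>S\<in>{S. S \<subseteq> {..<K} \<and> P (card S)}. q^card S * (1-q)^(K - card S))"
proof -
  define E where "E S = {\<omega>\<in>space M. {k\<in>{..<K}. \<omega> \<in> A k} = S}" for S
  define B where "B S k = (if k \<in> S then A k else space M - A k)" for S k
  have union: "{\<omega>\<in>space M. P (card {k\<in>{..<K}. \<omega> \<in> A k})} = (\<Union>S\<in>{S. S \<subseteq> {..<K} \<and> P (card S)}. E S)"
    by (auto simp: E_def)
  have disj: "disjoint_family_on E {S. S \<subseteq> {..<K} \<and> P (card S)}"
    by (auto simp: disjoint_family_on_def E_def)
  have indS: "indep_sets (\<lambda>k. sigma_sets (space M) {A k}) UNIV"
  proof (rule indep_sets_sigma)
    show "indep_sets (\<lambda>i. {A i}) UNIV" using ind unfolding indep_events_def_alt .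
    fix i show "Int_stable {A i}" unfolding Int_stable_def by simp
  qed
  have EB: "E S = space M \<inter> (\<Inter>k\<in>{..<K}. B S k)" if "S \<subseteq> {..<K}" for S
  proof (intro set_eqI iffI)
    fix x assume "x \<in> E S" then show "x \<in> space M \<inter> (\<Inter>k\<in>{..<K}. B S k)"
      using that by (auto simp: E_def B_def)
  next
    fix x assume x: "x \<in> space M \<inter> (\<Inter>k\<in>{..<K}. B S k)"
    have "k \<in> S \<longleftrightarrow> x \<in> A k" if "k < K" for k
      using x that by (auto simp: B_def split: if_splits)
    then show "x \<in> E S" using x \<open>S \<subseteq> {..<K}\<close> by (auto simp: E_def)
  qed
  have Bev: "B S k \<in> events" for S k using ev by (auto simp: B_def)
  have Eev: "E S \<in> events" if "S \<subseteq> {..<K}" for S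
    using EB[OF that] Bev by auto
  have Eprob: "prob (E S) = q^card S * (1-q)^(K - card S)" if S: "S \<subseteq> {..<K}" for S
  proof (cases "K = 0")
    case True
    then have "E S = space M" using EB[OF S] by simp
    then show ?thesis using True S by (simp add: prob_space)
  next
    case False
    have "E S = (\<Inter>k\<in>{..<K}. B S k)"
      using EB[OF S] False Bev[THEN sets.sets_into_space] by blast
    also have "prob \<dots> = (\<Prod>k\<in>{..<K}. prob (B S k))"
    proof (rule indep_setsD[OF indS])
      show "{..<K} \<noteq> {}" using False by auto
      show "\<forall>j\<in>{..<K}. B S j \<in> sigma_sets (space M) {A j}"
        by (auto simp: B_def intro: sigma_sets.Basic sigma_sets.Compl)
    qed auto
    also have "\<dots> = (\<Prod>k\<in>{..<K}. if k \<in> S then q else 1 - q)"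
      by (rule prod.cong) (auto simp: B_def pr prob_compl ev)
    also have "\<dots> = q ^ card ({..<K} \<inter> S) * (1-q) ^ card ({..<K} \<inter> - S)"
      by (simp add: prod.If_cases)
    also have "{..<K} \<inter> S = S" using S by auto
    also have "card ({..<K} \<inter> - S) = K - card S"
    proof -
      have "{..<K} \<inter> - S = {..<K} - S" by auto
      then show ?thesis using S by (simp add: card_Diff_subset finite_subset)
    qed
    finally show ?thesis .
  qed
  have fin: "finite {S. S \<subseteq> {..<K} \<and> P (card S)}" by auto
  show ?thesis
    unfolding union
    by (subst measure_finite_Union[OF fin _ disj]) (auto simp: Eev Eprob intro!: sum.cong)
qed

lemma (in prob_space) count_ev:
  fixes A :: "nat \<Rightarrow> 'a set"
  assumes ev: "\<And>k. A k \<in> events"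
  shows "{\<omega>\<in>space M. P (card {k\<in>{..<K}. \<omega> \<in> A k})} \<in> events"
proof -
  have "{\<omega>\<in>space M. P (card {k\<in>{..<K}. \<omega> \<in> A k})} =
     (\<Union>S\<in>{S. S \<subseteq> {..<K} \<and> P (card S)}. space M \<inter> (\<Inter>k\<in>{..<K}. if k \<in> S then A k else space M - A k))"
  proof (intro set_eqI iffI)
    fix x assume x: "x \<in> {\<omega>\<in>space M. P (card {k\<in>{..<K}. \<omega> \<in> A k})}"
    show "x \<in> (\<Union>S\<in>{S. S \<subseteq> {..<K} \<and> P (card S)}. space M \<inter> (\<Inter>k\<in>{..<K}. if k \<in> S then A k else space M - A k))"
      using x by (intro UN_I[of "{k\<in>{..<K}. x \<in> A k}"]) auto
  next
    fix x assume "x \<in> (\<Union>S\<in>{S. S \<subseteq> {..<K} \<and> P (card S)}. space M \<inter> (\<Inter>k\<in>{..<K}. if k \<in> S then A k else space M - A k))"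
    then obtain S where S: "S \<subseteq> {..<K}" "P (card S)" "x \<in> space M"
      and x: "\<And>k. k < K \<Longrightarrow> x \<in> (if k \<in> S then A k else space M - A k)" by auto
    have "k \<in> S \<longleftrightarrow> x \<in> A k" if "k < K" for k
      using x[OF that] by (auto split: if_splits)
    then have "{k\<in>{..<K}. x \<in> A k} = S" using S by auto
    then show "x \<in> {\<omega>\<in>space M. P (card {k\<in>{..<K}. \<omega> \<in> A k})}" using S by auto
  qed
  also have "\<dots> \<in> events"
  proof (intro sets.finite_UN ballI)
    fix S
    define B where "B k = (if k \<in> S then A k else space M - A k)" for k
    have Bev: "B k \<in> events" for k using ev by (auto simp: B_def)
    have "space M \<inter> (\<Inter>k\<in>{..<K}. B k) \<in> events"
    proof (cases "K = 0")
      case True then show ?thesis by simp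
    next
      case False then show ?thesis using Bev by (intro sets.Int sets.top sets.finite_INT) auto
    qed
    then show "space M \<inter> (\<Inter>k\<in>{..<K}. if k \<in> S then A k else space M - A k) \<in> events"
      by (simp only: B_def)
  qed auto
  finally show ?thesis .
qed



definition Fk :: "nat \<Rightarrow> real \<Rightarrow> real \<Rightarrow> real" where
  "Fk K t q = (\<Sum>S\<in>{S. S \<subseteq> {..<K} \<and> t < real (card S)}. q^card S * (1-q)^(K - card S))"

lemma Fk_cont: "(f \<longlongrightarrow> q) F \<Longrightarrow> ((\<lambda>x. Fk K t (f x)) \<longlongrightarrow> Fk K t q) F"
  unfolding Fk_def by (intro tendsto_intros)

lemma Fk_one: assumes "t < real K" shows "Fk K t 1 = 1"
proof -
  have "Fk K t 1 = (\<Sum>S\<in>{S. S \<subseteq> {..<K} \<and> t < real (card S)}. if S = {..<K} then 1 else 0)"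
    unfolding Fk_def
  proof (rule sum.cong)
    fix S assume "S \<in> {S. S \<subseteq> {..<K} \<and> t < real (card S)}"
    then have S: "S \<subseteq> {..<K}" by auto
    have "card S = K \<longleftrightarrow> S = {..<K}"
      using S card_subset_eq[of "{..<K}" S] by auto
    moreover have "card S \<le> K" using S card_mono[of "{..<K}" S] by auto
    ultimately show "1 ^ card S * (1 - 1) ^ (K - card S) = (if S = {..<K} then 1 else (0::real))"
      by auto
  qed simp
  also have "\<dots> = 1" using assms by (subst sum.delta) auto
  finally show ?thesis .
qed

lemma Fk_nonneg: "0 \<le> q \<Longrightarrow> q \<le> 1 \<Longrightarrow> 0 \<le> Fk K t q"
  unfolding Fk_def by (intro sum_nonneg) auto

lemma Fk_mono: "0 \<le> q \<Longrightarrow> q \<le> 1 \<Longrightarrow> t \<le> t' \<Longrightarrow> Fk K t' q \<le> Fk K t q"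
  unfolding Fk_def by (intro sum_mono2) auto

lemma Fk_bound:
  assumes q: "0 \<le> q" "q \<le> 1" and t: "0 \<le> t"
  shows "Fk K t q \<le> real (card {S. S \<subseteq> {..<K} \<and> t < real (card S)}) * q powr t"
proof -
  have "Fk K t q \<le> (\<Sum>S\<in>{S. S \<subseteq> {..<K} \<and> t < real (card S)}. q powr t)"
    unfolding Fk_def
  proof (rule sum_mono)
    fix S assume "S \<in> {S. S \<subseteq> {..<K} \<and> t < real (card S)}"
    then have c: "t < real (card S)" by auto
    have "q^card S * (1-q)^(K - card S) \<le> q ^ card S * 1"
      using q by (intro mult_left_mono power_le_one) auto
    also have "\<dots> \<le> q powr t"
    proof (cases "q = 0")
      case True
      have "card S \<noteq> 0" using c t by linarith
      then show ?thesis using True by (simp add: zero_power)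
    next
      case False
      then have "q ^ card S = q powr real (card S)" using q by (simp add: powr_realpow)
      also have "\<dots> \<le> q powr t" using q False c by (intro powr_mono') auto
      finally show ?thesis by simp
    qed
    finally show "q^card S * (1-q)^(K - card S) \<le> q powr t" .
  qed
  then show ?thesis by simp
qed

lemma card_bound:
  assumes a: "0 \<le> a" and K: "1 \<le> K"
  shows "real (card {S. S \<subseteq> {..<K} \<and> real K - a < real (card S)}) \<le> (a + 1) * real K powr a"
proof -
  define m where "m = nat \<lfloor>a\<rfloor>"
  have ma: "real m \<le> a" using a by (simp add: m_def)
  have inj: "inj_on (\<lambda>S. {..<K} - S) {S. S \<subseteq> {..<K} \<and> real K - a < real (card S)}"
    by (rule inj_onI) auto
  have img: "(\<lambda>S. {..<K} - S) ` {S. S \<subseteq> {..<K} \<and> real K - a < real (card S)}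
      \<subseteq> (\<Union>i\<in>{..m}. {T. T \<subseteq> {..<K} \<and> card T = i})"
  proof clarify
    fix S assume S: "S \<subseteq> {..<K}" "real K - a < real (card S)"
    have "card ({..<K} - S) = K - card S" using S by (simp add: card_Diff_subset finite_subset)
    moreover have "card S \<le> K" using S card_mono[of "{..<K}" S] by auto
    ultimately have "real (card ({..<K} - S)) < a + 0" using S by simp
    then have "card ({..<K} - S) \<le> m" unfolding m_def by linarith
    then show "{..<K} - S \<in> (\<Union>i\<in>{..m}. {T. T \<subseteq> {..<K} \<and> card T = i})" by auto
  qed
  have "card {S. S \<subseteq> {..<K} \<and> real K - a < real (card S)}
      = card ((\<lambda>S. {..<K} - S) ` {S. S \<subseteq> {..<K} \<and> real K - a < real (card S)})"
    using inj by (simp add: card_image)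
  also have "\<dots> \<le> card (\<Union>i\<in>{..m}. {T. T \<subseteq> {..<K} \<and> card T = i})"
    by (intro card_mono img) auto
  also have "\<dots> \<le> (\<Sum>i\<in>{..m}. card {T. T \<subseteq> {..<K} \<and> card T = i})"
    by (rule card_UN_le) auto
  also have "\<dots> = (\<Sum>i\<in>{..m}. K choose i)" by (simp add: n_subsets)
  also have "\<dots> \<le> (\<Sum>i\<in>{..m}. K ^ m)"
  proof (rule sum_mono)
    fix i assume "i \<in> {..m}"
    then have im: "i \<le> m" by auto
    have "K choose i \<le> K ^ i"
    proof (cases "i \<le> K")
      case True then show ?thesis by (rule binomial_le_pow)
    next
      case False then show ?thesis by (simp add: binomial_eq_0)
    qed
    also have "\<dots> \<le> K ^ m" using K im by (intro power_increasing) auto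
    finally show "K choose i \<le> K ^ m" .
  qed
  also have "\<dots> = (m + 1) * K ^ m" by simp
  finally have "real (card {S. S \<subseteq> {..<K} \<and> real K - a < real (card S)}) \<le> (real m + 1) * real K ^ m"
    by (metis of_nat_1 of_nat_add of_nat_le_iff of_nat_mult of_nat_power)
  also have "\<dots> \<le> (a + 1) * real K powr a"
  proof (intro mult_mono)
    have "real K ^ m = real K powr real m" using K by (simp add: powr_realpow)
    also have "\<dots> \<le> real K powr a" using K ma by (intro powr_mono) auto
    finally show "real K ^ m \<le> real K powr a" .
  qed (use ma in auto)
  finally show ?thesis .
qed

lemma exp_bound_lim:
  fixes q :: real
  assumes q: "0 < q" "q < 1"
  shows "(\<lambda>K::nat. (2 * sqrt (real K) + 1) * real K powr (2 * sqrt (real K)) * q powr (real K - 2 * sqrt (real K))) \<longlonglongrightarrow> 0"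
proof -
  define h where "h K = ln (2 * sqrt (real K) + 1) / real K + 2 * sqrt (real K) * ln (real K) / real K
     - ln q * (2 * sqrt (real K) / real K)" for K :: nat
  have h1: "(\<lambda>K::nat. ln (2 * sqrt (real K) + 1) / real K) \<longlonglongrightarrow> 0" by real_asymp
  have h2: "(\<lambda>K::nat. 2 * sqrt (real K) * ln (real K) / real K) \<longlonglongrightarrow> 0" by real_asymp
  have h3: "(\<lambda>K::nat. 2 * sqrt (real K) / real K) \<longlonglongrightarrow> 0" by real_asymp
  have "(\<lambda>K. h K + ln q) \<longlonglongrightarrow> 0 + 0 - ln q * 0 + ln q"
    unfolding h_def by (intro tendsto_intros h1 h2 h3)
  then have hl: "(\<lambda>K. h K + ln q) \<longlonglongrightarrow> ln q" by simp
  have lnq: "ln q < 0" using q by simp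
  have E: "filterlim (\<lambda>K. (h K + ln q) * real K) at_bot sequentially"
    by (rule filterlim_tendsto_neg_mult_at_bot[OF hl lnq filterlim_real_sequentially])
  have "(\<lambda>K. exp ((h K + ln q) * real K)) \<longlonglongrightarrow> 0"
    by (rule filterlim_compose[OF exp_at_bot E])
  moreover have "eventually (\<lambda>K. exp ((h K + ln q) * real K) =
      (2 * sqrt (real K) + 1) * real K powr (2 * sqrt (real K)) * q powr (real K - 2 * sqrt (real K))) sequentially"
    using eventually_ge_at_top[of "1::nat"]
  proof eventually_elim
    case (elim K)
    then have Kp: "real K > 0" by simp
    have "(h K + ln q) * real K = ln (2 * sqrt (real K) + 1) + 2 * sqrt (real K) * ln (real K)
        + (real K - 2 * sqrt (real K)) * ln q"
      unfolding h_def using Kp by (simp add: field_simps)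
    have pos: "0 < sqrt (real K) * 2 + 1" by (simp add: add_nonneg_pos)
    have "(2 * sqrt (real K) + 1) * real K powr (2 * sqrt (real K)) * q powr (real K - 2 * sqrt (real K))
       = exp (ln (2 * sqrt (real K) + 1)) * exp (2 * sqrt (real K) * ln (real K))
         * exp ((real K - 2 * sqrt (real K)) * ln q)"
      using pos Kp q by (simp add: powr_def mult.commute)
    also have "\<dots> = exp ((h K + ln q) * real K)"
      unfolding \<open>(h K + ln q) * real K = _\<close> by (simp add: exp_add)
    finally show ?case by simp
  qed
  ultimately show ?thesis by (rule Lim_transform_eventually)
qed



lemma Fk_lim0:
  assumes q: "0 \<le> q" "q < 1"
  shows "(\<lambda>K. Fk K (real K - 2 * sqrt (real K)) q) \<longlonglongrightarrow> 0"
proof -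
  define b where "b K = (2 * sqrt (real K) + 1) * real K powr (2 * sqrt (real K)) * q powr (real K - 2 * sqrt (real K))" for K :: nat
  have b0: "b \<longlonglongrightarrow> 0"
  proof (cases "q = 0")
    case True
    have "b = (\<lambda>K. 0)" by (rule ext) (simp add: b_def True)
    then show ?thesis by simp
  next
    case False then show ?thesis unfolding b_def using q by (intro exp_bound_lim) auto
  qed
  have ev: "eventually (\<lambda>K. 0 \<le> Fk K (real K - 2 * sqrt (real K)) q \<and> Fk K (real K - 2 * sqrt (real K)) q \<le> b K) sequentially"
    using eventually_ge_at_top[of "4::nat"]
  proof eventually_elim
    case (elim K)
    then have K4: "4 \<le> real K" by simp
    have "2 * sqrt (real K) \<le> real K"
    proof -
      have "sqrt (real K) * sqrt (real K) = real K" by simp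
      moreover have "2 \<le> sqrt (real K)" using K4 real_sqrt_le_mono[of 4 "real K"] by simp
      moreover have "2 * sqrt (real K) \<le> sqrt (real K) * sqrt (real K)"
        using \<open>2 \<le> sqrt (real K)\<close> by (intro mult_right_mono) auto
      ultimately show ?thesis by simp
    qed
    then have t: "0 \<le> real K - 2 * sqrt (real K)" by simp
    have "Fk K (real K - 2 * sqrt (real K)) q \<le>
        real (card {S. S \<subseteq> {..<K} \<and> real K - 2 * sqrt (real K) < real (card S)}) * q powr (real K - 2 * sqrt (real K))"
      using q t by (intro Fk_bound) auto
    also have "\<dots> \<le> b K" unfolding b_def
      using elim by (intro mult_right_mono card_bound) auto
    finally show ?case using q Fk_nonneg by auto
  qed
  show ?thesis
    by (rule tendsto_sandwich[OF _ _ tendsto_const b0]) (use ev in \<open>auto elim: eventually_mono\<close>)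
qed

lemma lili_meas:
  assumes P: "prob_space M"
    and ev: "\<And>k. {om \<in> space M. u \<in> Lf k om v} \<in> sets M"
    and ind: "prob_space.indep_events M (\<lambda>k. {om \<in> space M. u \<in> Lf k om v}) UNIV"
    and pr: "\<And>k. measure M {om \<in> space M. u \<in> Lf k om v} = q"
  shows "measure M {om \<in> space M. t < real (card {k \<in> {..<K}. u \<in> Lf k om v})} = Fk K t q"
    and "{om \<in> space M. t < real (card {k \<in> {..<K}. u \<in> Lf k om v})} \<in> sets M"
proof -
  have eq: "{om \<in> space M. t < real (card {k \<in> {..<K}. u \<in> Lf k om v})}
      = {om \<in> space M. t < real (card {k \<in> {..<K}. om \<in> {om \<in> space M. u \<in> Lf k om v}})}"
    by auto
  show "measure M {om \<in> space M. t < real (card {k \<in> {..<K}. u \<in> Lf k om v})} = Fk K t q"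
    unfolding eq Fk_def by (rule prob_space.count_prob[OF P ev ind pr])
  show "{om \<in> space M. t < real (card {k \<in> {..<K}. u \<in> Lf k om v})} \<in> sets M"
    unfolding eq by (rule prob_space.count_ev[OF P ev])
qed



theorem mainTheorem7:
  fixes Om :: "nat \<Rightarrow> 'o measure"
    and L :: "nat \<Rightarrow> nat \<Rightarrow> 'o \<Rightarrow> real^'d \<Rightarrow> (real^'d) set"
    and x y :: "real^'d"
  assumes prob: "\<And>n. prob_space (Om n)"
    and leaf_self: "\<And>n k om u. u \<in> L n k om u"
    and leaf_unique: "\<And>n k om u v. u \<in> L n k om v \<Longrightarrow> L n k om u = L n k om v"
    and meas: "\<And>n k u v. {om \<in> space (Om n). u \<in> L n k om v} \<in> sets (Om n)"
    and indep: "\<And>n u v. prob_space.indep_events (Om n)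
                    (\<lambda>k. {om \<in> space (Om n). u \<in> L n k om v}) UNIV"
    and same: "\<And>n k k' u v. measure (Om n) {om \<in> space (Om n). u \<in> L n k om v}
                           = measure (Om n) {om \<in> space (Om n). u \<in> L n k' om v}"
    and conv: "\<And>u v. convergent (\<lambda>n. measure (Om n) {om \<in> space (Om n). u \<in> L n 0 om v})"
    and xy: "x \<noteq> y"
  shows "(prob_I Om L y x < 1 \<longrightarrow> (\<forall>w. prob_I_inter_is Om L w x y 0)) \<and>
         (prob_I Om L y x = 1 \<longleftrightarrow> (\<forall>w. prob_I Om L w x = 1 \<longleftrightarrow> prob_I Om L w y = 1))"
proof -
  define pn where "pn u v n = measure (Om n) {om \<in> space (Om n). u \<in> L n 0 om v}" for u v n
  define p where "p u v = lim (pn u v)" for u v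
  have pn_lim: "pn u v \<longlonglongrightarrow> p u v" for u v
    using conv[of u v] unfolding pn_def p_def by (simp add: convergent_LIMSEQ_iff)
  have pn_k: "measure (Om n) {om \<in> space (Om n). u \<in> L n k om v} = pn u v n" for n k u v
    unfolding pn_def by (rule same)
  have pn01: "0 \<le> pn u v n" "pn u v n \<le> 1" for u v n
    unfolding pn_def using prob_space.prob_le_1[OF prob] by auto
  have p01: "0 \<le> p u v" "p u v \<le> 1" for u v
  proof -
    show "0 \<le> p u v" by (rule LIMSEQ_le_const[OF pn_lim]) (use pn01 in blast)
    show "p u v \<le> 1" by (rule LIMSEQ_le_const2[OF pn_lim]) (use pn01 in blast)
  qed
  have cnt: "measure (Om n) {om \<in> space (Om n). t < real (card {k \<in> {..<K}. u \<in> L n k om v})} = Fk K t (pn u v n)"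
    and cnt_ev: "{om \<in> space (Om n). t < real (card {k \<in> {..<K}. u \<in> L n k om v})} \<in> sets (Om n)"
    for n K t u v
    by (rule lili_meas[OF prob meas indep pn_k])+
  have inner: "(\<lambda>n. measure (Om n) (lili_event (Om n) (L n) K u v)) \<longlonglongrightarrow> Fk K (real K - sqrt (real K)) (p u v)" for K u v
    unfolding lili_event_def cnt by (rule Fk_cont[OF pn_lim])
  have probI: "prob_I Om L u v = (if p u v = 1 then 1 else 0)" for u v
  proof -
    have "prob_I Om L u v = lim (\<lambda>K. Fk K (real K - sqrt (real K)) (p u v))"
    proof -
      have "\<And>K. lim (\<lambda>n. measure (Om n) (lili_event (Om n) (L n) K u v)) = Fk K (real K - sqrt (real K)) (p u v)"
        by (rule limI[OF inner])
      then show ?thesis unfolding prob_I_def by simp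
    qed
    also have "\<dots> = (if p u v = 1 then 1 else 0)"
    proof (cases "p u v = 1")
      case True
      have "(\<lambda>K. Fk K (real K - sqrt (real K)) (p u v)) \<longlonglongrightarrow> 1"
      proof (rule tendsto_eventually)
        show "\<forall>\<^sub>F K in sequentially. Fk K (real K - sqrt (real K)) (p u v) = 1"
          using eventually_ge_at_top[of "1::nat"]
        proof eventually_elim
          case (elim K)
          then have "0 < sqrt (real K)" by simp
          then have "real K - sqrt (real K) < real K" by simp
          then show ?case unfolding True by (rule Fk_one)
        qed
      qed
      then show ?thesis using True by (simp add: limI)
    next
      case False
      then have pl: "p u v < 1" using p01[of u v] by auto
      have "(\<lambda>K. Fk K (real K - sqrt (real K)) (p u v)) \<longlonglongrightarrow> 0"
      proof (rule tendsto_sandwich[OF _ _ tendsto_const Fk_lim0[OF p01(1) pl]])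
        show "\<forall>\<^sub>F n in sequentially. 0 \<le> Fk n (real n - sqrt (real n)) (p u v)"
          using p01 by (intro always_eventually allI Fk_nonneg)
        show "\<forall>\<^sub>F n in sequentially. Fk n (real n - sqrt (real n)) (p u v) \<le> Fk n (real n - 2 * sqrt (real n)) (p u v)"
          using p01 by (intro always_eventually allI Fk_mono) auto
      qed
      then show ?thesis using False by (simp add: limI)
    qed
    finally show ?thesis .
  qed
  have I1: "prob_I Om L u v = 1 \<longleftrightarrow> p u v = 1" for u v using probI by simp
  have tri: "p e f = 1"
    if pab: "p a b = 1" and pcd: "p c d = 1"
      and sub: "\<And>n om. a \<in> L n 0 om b \<Longrightarrow> c \<in> L n 0 om d \<Longrightarrow> e \<in> L n 0 om f" for a b c d e f
  proof -
    have "pn a b n + pn c d n - 1 \<le> pn e f n" for n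
    proof -
      interpret P: prob_space "Om n" by (rule prob)
      define A where "A = {om \<in> space (Om n). a \<in> L n 0 om b}"
      define B where "B = {om \<in> space (Om n). c \<in> L n 0 om d}"
      define C where "C = {om \<in> space (Om n). e \<in> L n 0 om f}"
      have AB: "A \<in> fmeasurable (Om n)" "B \<in> fmeasurable (Om n)" "C \<in> sets (Om n)"
        unfolding A_def B_def C_def using meas by (auto simp: P.fmeasurable_eq_sets)
      have "measure (Om n) (A \<union> B) = measure (Om n) A + measure (Om n) B - measure (Om n) (A \<inter> B)"
        using AB(1,2) by (rule measure_Un3)
      moreover have "measure (Om n) (A \<union> B) \<le> 1" by (rule P.prob_le_1)
      moreover have "measure (Om n) (A \<inter> B) \<le> measure (Om n) C"
        using AB sub by (intro P.finite_measure_mono) (auto simp: A_def B_def C_def)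
      ultimately show ?thesis unfolding pn_def A_def B_def C_def by linarith
    qed
    then have "p a b + p c d - 1 \<le> p e f"
      by (intro LIMSEQ_le[OF tendsto_diff[OF tendsto_add[OF pn_lim pn_lim] tendsto_const] pn_lim]) auto
    then show ?thesis using pab pcd p01[of e f] by linarith
  qed
  have pyy: "p y y = 1"
  proof -
    have "pn y y n = 1" for n
    proof -
      interpret P: prob_space "Om n" by (rule prob)
      show ?thesis unfolding pn_def using leaf_self by (simp add: P.prob_space)
    qed
    then have "pn y y = (\<lambda>n. 1)" by auto
    then have "pn y y \<longlonglongrightarrow> 1" by simp
    then show ?thesis using pn_lim[of y y] LIMSEQ_unique by blast
  qed
  have part2: "prob_I Om L y x = 1 \<longleftrightarrow> (\<forall>w. prob_I Om L w x = 1 \<longleftrightarrow> prob_I Om L w y = 1)"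
    unfolding I1
  proof (rule iffI)
    assume pyx: "p y x = 1"
    show "\<forall>w. p w x = 1 \<longleftrightarrow> p w y = 1"
    proof (intro allI iffI)
      fix w
      assume "p w x = 1"
      then show "p w y = 1"
      proof (rule tri[OF _ pyx])
        fix n om assume "w \<in> L n 0 om x" "y \<in> L n 0 om x"
        then show "w \<in> L n 0 om y" using leaf_unique by metis
      qed
    next
      fix w
      assume "p w y = 1"
      then show "p w x = 1"
      proof (rule tri[OF _ pyx])
        fix n om assume "w \<in> L n 0 om y" "y \<in> L n 0 om x"
        then show "w \<in> L n 0 om x" using leaf_unique by metis
      qed
    qed
  next
    assume "\<forall>w. p w x = 1 \<longleftrightarrow> p w y = 1"
    then show "p y x = 1" using pyy by auto
  qed
  have part1: "\<forall>w. prob_I_inter_is Om L w x y 0" if lt: "prob_I Om L y x < 1"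
  proof
    fix w
    have pl: "p y x < 1" using lt p01[of y x] probI[of y x] by (auto split: if_splits)
    define m where "m K n = measure (Om n) (lili_event (Om n) (L n) K w x \<inter> lili_event (Om n) (L n) K w y)" for K n
    define b where "b K = Fk K (real K - 2 * sqrt (real K)) (p y x)" for K
    have b0: "b \<longlonglongrightarrow> 0" unfolding b_def by (rule Fk_lim0[OF p01(1) pl])
    have mle: "m K n \<le> Fk K (real K - 2 * sqrt (real K)) (pn y x n)" for K n
    proof -
      have sub: "lili_event (Om n) (L n) K w x \<inter> lili_event (Om n) (L n) K w y \<subseteq>
          {om \<in> space (Om n). real K - 2 * sqrt (real K) < real (card {k \<in> {..<K}. y \<in> L n k om x})}"
      proof
        fix om assume "om \<in> lili_event (Om n) (L n) K w x \<inter> lili_event (Om n) (L n) K w y"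
        then have om: "om \<in> space (Om n)"
          and cA: "real K - sqrt (real K) < real (card {k \<in> {..<K}. w \<in> L n k om x})"
          and cB: "real K - sqrt (real K) < real (card {k \<in> {..<K}. w \<in> L n k om y})"
          by (auto simp: lili_event_def)
        define A where "A = {k \<in> {..<K}. w \<in> L n k om x}"
        define B where "B = {k \<in> {..<K}. w \<in> L n k om y}"
        define C where "C = {k \<in> {..<K}. y \<in> L n k om x}"
        have "A \<inter> B \<subseteq> C"
        proof
          fix k assume "k \<in> A \<inter> B"
          then have "k < K" "w \<in> L n k om x" "w \<in> L n k om y" by (auto simp: A_def B_def)
          then have "L n k om x = L n k om y" using leaf_unique by metis
          then show "k \<in> C" using \<open>k < K\<close> leaf_self[of y n k om] by (auto simp: C_def)
        qed
        then have "card (A \<inter> B) \<le> card C" by (intro card_mono) (auto simp: C_def)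
        moreover have "card A + card B = card (A \<union> B) + card (A \<inter> B)"
          by (rule card_Un_Int) (auto simp: A_def B_def)
        moreover have "card (A \<union> B) \<le> K"
          using card_mono[of "{..<K}" "A \<union> B"] by (auto simp: A_def B_def)
        ultimately have "real (card A) + real (card B) \<le> real K + real (card C)"
          by linarith
        then have "real K - 2 * sqrt (real K) < real (card {k \<in> {..<K}. y \<in> L n k om x})"
          using cA cB unfolding A_def B_def C_def by linarith
        then show "om \<in> {om \<in> space (Om n). real K - 2 * sqrt (real K) < real (card {k \<in> {..<K}. y \<in> L n k om x})}"
          using om by simp
      qed
      interpret P: prob_space "Om n" by (rule prob)
      have "m K n \<le> measure (Om n) {om \<in> space (Om n). real K - 2 * sqrt (real K) < real (card {k \<in> {..<K}. y \<in> L n k om x})}"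
        unfolding m_def by (rule P.finite_measure_mono[OF sub cnt_ev])
      then show ?thesis by (simp only: cnt)
    qed
    have ls: "limsup (\<lambda>n. ereal (m K n)) \<le> ereal (b K)" for K
    proof -
      have "limsup (\<lambda>n. ereal (m K n)) \<le> limsup (\<lambda>n. ereal (Fk K (real K - 2 * sqrt (real K)) (pn y x n)))"
        by (rule Limsup_mono) (simp add: mle)
      also have "\<dots> = ereal (b K)" unfolding b_def
        by (rule lim_imp_Limsup) (auto intro!: tendsto_ereal Fk_cont pn_lim)
      finally show ?thesis .
    qed
    have li: "0 \<le> liminf (\<lambda>n. ereal (m K n))" for K
      by (rule Liminf_bounded) (simp add: m_def)
    have lils: "liminf (\<lambda>n. ereal (m K n)) \<le> limsup (\<lambda>n. ereal (m K n))" for K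
      by (rule Liminf_le_Limsup) simp
    have bl: "(\<lambda>K. ereal (b K)) \<longlonglongrightarrow> ereal 0" using b0 by (rule tendsto_ereal)
    have z: "(\<lambda>K. ereal 0) \<longlonglongrightarrow> ereal 0" by simp
    have li0: "ereal 0 \<le> liminf (\<lambda>n. ereal (m K n))" for K using li[of K] by (simp add: zero_ereal_def)
    have "(\<lambda>K. limsup (\<lambda>n. ereal (m K n))) \<longlonglongrightarrow> ereal 0"
    proof (rule tendsto_sandwich[OF _ _ z bl])
      show "\<forall>\<^sub>F K in sequentially. ereal 0 \<le> limsup (\<lambda>n. ereal (m K n))"
        by (rule always_eventually) (metis li0 lils order_trans)
      show "\<forall>\<^sub>F K in sequentially. limsup (\<lambda>n. ereal (m K n)) \<le> ereal (b K)"
        by (rule always_eventually) (metis ls)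
    qed
    moreover have "(\<lambda>K. liminf (\<lambda>n. ereal (m K n))) \<longlonglongrightarrow> ereal 0"
    proof (rule tendsto_sandwich[OF _ _ z bl])
      show "\<forall>\<^sub>F K in sequentially. ereal 0 \<le> liminf (\<lambda>n. ereal (m K n))"
        by (rule always_eventually) (metis li0)
      show "\<forall>\<^sub>F K in sequentially. liminf (\<lambda>n. ereal (m K n)) \<le> ereal (b K)"
        by (rule always_eventually) (metis ls lils order_trans)
    qed
    ultimately show "prob_I_inter_is Om L w x y 0"
      unfolding prob_I_inter_is_def m_def by simp
  qed
  show ?thesis using part1 part2 by blast
qed

end
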